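(* Let $(x_n)_{n \geq 1}$ be a sequence of vectors with $x_n$ on the complex unit sphere of $\mathbb{C}^n$ for all $n$. Then there exists a unique virtual isometry $(u_n)_{n \geq 1}$ such that $u_n(e_n) = x_n$ for all $n \geq 1$, and it is given by $u_n = r_n r_{n-1}\cdots r_1$, where for $j \in \{1,\dots,n\}$, $r_j = \mathrm{Id}$ if $x_j = e_j$, and otherwise $r_j$ is the unique reflection (unitary operator $r$ with $r-\mathrm{Id}$ of rank one, acting on $\mathbb{C}^j$ and fixing $e_k$ for $k>j$) such that $r_j(e_j) = x_j$. Moreover, if $x_n = e_{i_n}$ with $i_n \in \{1,\dots,n\}$ for all $n$, then $(u_n)_{n\ge1}$ is the sequence of permutation matrices (with $u_n e_j = e_{\sigma_n(j)}$) of the virtual permutation $(\sigma_n)_{n\ge1}$ given by $\sigma_n = \tau_{n,i_n}\tau_{n-1,i_{n-1}}\cdots\tau_{1,i_1}$, where $\tau_{j,k} = \mathrm{Id}$ if $j = k$ and $\tau_{j,k}$ is the transposition $(j,k)$ if $j \neq k$.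
   Context: Let $(e_k)$ be the canonical basis of $\ell^2$; identify $\mathbb{C}^n$ with the span of $e_1,\dots,e_n$ and $U(n)$ with the unitary operators fixing every $e_k$, $k>n$. For $n\ge m\ge1$ and $u\in U(n)$, $\pi_{n,m}(u)$ is the unique $v\in U(m)$ such that the range of $u-v$ is contained in $(u-\mathrm{Id})(\mathrm{span}\{e_k:k>m\})$ (existence and uniqueness are known). A virtual isometry is a sequence $(u_n)_{n\ge1}$ with $u_n\in U(n)$ and $\pi_{n+1,n}(u_{n+1})=u_n$ for all $n\ge1$. A virtual permutation is a sequence $(\sigma_n)$, $\sigma_n\in\mathcal{S}_n$, such that for $n\ge m$, $\sigma_m$ is obtained from $\sigma_n$ by deleting $m+1,\dots,n$ from its cycle structure. *)

theory Defs
  imports "HOL-Analysis.Analysis" "HOL-Combinatorics.Permutations"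
begin

(* Operators on l^2 that fix all but finitely many basis vectors are represented by
   their (infinite) matrices  u :: nat => nat => complex,  u i j = <e_i, u e_j>.
   Basis vectors are e_1, e_2, ...; index 0 is a dummy coordinate, always fixed. *)

type_synonym cmat = "nat \<Rightarrow> nat \<Rightarrow> complex"
type_synonym cvec = "nat \<Rightarrow> complex"

definition kd :: "nat \<Rightarrow> nat \<Rightarrow> complex" where
  "kd i j = (if i = j then 1 else 0)"

definition evec :: "nat \<Rightarrow> cvec" where
  "evec k = (\<lambda>i. if i = k then 1 else 0)"

definition Idm :: cmat where
  "Idm = (\<lambda>i j. kd i j)"

(* product of two such matrices (row sums are finite for the matrices considered) *)
definition mmul :: "cmat \<Rightarrow> cmat \<Rightarrow> cmat" where
  "mmul A B = (\<lambda>i j. \<Sum>k\<in>{k. A i k \<noteq> 0}. A i k * B k j)"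

definition U_grp :: "nat \<Rightarrow> cmat set" where
  "U_grp n = {u. (\<forall>i j. (i \<notin> {1..n} \<or> j \<notin> {1..n}) \<longrightarrow> u i j = kd i j)
             \<and> (\<forall>i\<in>{1..n}. \<forall>j\<in>{1..n}. (\<Sum>k=1..n. cnj (u k i) * u k j) = kd i j)
             \<and> (\<forall>i\<in>{1..n}. \<forall>j\<in>{1..n}. (\<Sum>k=1..n. u i k * cnj (u j k)) = kd i j)}"

(* range of (u - v) contained in (u - Id)(span{e_k : k > m}), for u, v acting on C^n *)
definition range_cond :: "nat \<Rightarrow> nat \<Rightarrow> cmat \<Rightarrow> cmat \<Rightarrow> bool" where
  "range_cond n m u v = (\<forall>j. \<exists>c :: nat \<Rightarrow> complex. \<forall>i.
      u i j - v i j = (\<Sum>k\<in>{m<..n}. c k * (u i k - kd i k)))"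

definition pi_proj :: "nat \<Rightarrow> nat \<Rightarrow> cmat \<Rightarrow> cmat" where
  "pi_proj n m u = (THE v. v \<in> U_grp m \<and> range_cond n m u v)"

definition virtual_isometry :: "(nat \<Rightarrow> cmat) \<Rightarrow> bool" where
  "virtual_isometry u = (\<forall>n\<ge>1. u n \<in> U_grp n \<and> pi_proj (Suc n) n (u (Suc n)) = u n)"

definition sphere_n :: "nat \<Rightarrow> cvec set" where
  "sphere_n n = {x. (\<forall>i. i \<notin> {1..n} \<longrightarrow> x i = 0) \<and> (\<Sum>i=1..n. (cmod (x i))\<^sup>2) = 1}"

definition rank_one_pert :: "cmat \<Rightarrow> bool" where
  "rank_one_pert r = (\<exists>a b :: cvec. a \<noteq> (\<lambda>_. 0) \<and> b \<noteq> (\<lambda>_. 0) \<and>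
      (\<forall>i j. r i j - kd i j = a i * b j))"

definition refl_to :: "nat \<Rightarrow> cvec \<Rightarrow> cmat" where
  "refl_to j x = (THE r. r \<in> U_grp j \<and> rank_one_pert r \<and> (\<forall>i. r i j = x i))"

definition r_op :: "nat \<Rightarrow> cvec \<Rightarrow> cmat" where
  "r_op j x = (if x = evec j then Idm else refl_to j x)"

fun rprod :: "(nat \<Rightarrow> cmat) \<Rightarrow> nat \<Rightarrow> cmat" where
  "rprod r 0 = Idm"
| "rprod r (Suc n) = mmul (r (Suc n)) (rprod r n)"

(* deleting m+1, ..., n from the cycle structure of sigma *)
definition perm_restrict :: "nat \<Rightarrow> (nat \<Rightarrow> nat) \<Rightarrow> nat \<Rightarrow> nat" where
  "perm_restrict m \<sigma> i = (if i \<in> {1..m}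
      then (\<sigma> ^^ (LEAST k. k > 0 \<and> (\<sigma> ^^ k) i \<in> {1..m})) i else i)"

definition virtual_perm :: "(nat \<Rightarrow> nat \<Rightarrow> nat) \<Rightarrow> bool" where
  "virtual_perm \<sigma> = ((\<forall>n\<ge>1. \<sigma> n permutes {1..n}) \<and>
      (\<forall>m n. 1 \<le> m \<and> m \<le> n \<longrightarrow> \<sigma> m = perm_restrict m (\<sigma> n)))"

definition tau :: "nat \<Rightarrow> nat \<Rightarrow> nat \<Rightarrow> nat" where
  "tau j k = (if j = k then id else Transposition.transpose j k)"

fun sigma_prod :: "(nat \<Rightarrow> nat) \<Rightarrow> nat \<Rightarrow> nat \<Rightarrow> nat" where
  "sigma_prod ii 0 = id"
| "sigma_prod ii (Suc n) = tau (Suc n) (ii (Suc n)) \<circ> sigma_prod ii n"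

definition perm_mat :: "(nat \<Rightarrow> nat) \<Rightarrow> cmat" where
  "perm_mat \<sigma> = (\<lambda>i j. if i = \<sigma> j then 1 else 0)"

end

theory Submission
  imports Defs
begin


lemma kd_simp[simp]: "kd i i = 1" "i \<noteq> j \<Longrightarrow> kd i j = 0" by (auto simp: kd_def)

lemma sum_kd_right: "p \<in> S \<Longrightarrow> finite S \<Longrightarrow> (\<Sum>q\<in>S. f q * kd p q) = f p"
proof -
  assume "p \<in> S" "finite S"
  have "(\<Sum>q\<in>S. f q * kd p q) = (\<Sum>q\<in>S. if q = p then f q else 0)"
    by (rule sum.cong) (auto simp: kd_def)
  also have "\<dots> = f p" using \<open>p\<in>S\<close> \<open>finite S\<close> by simp
  finally show ?thesis .
qed

lemma sum_kd_left: "p \<in> S \<Longrightarrow> finite S \<Longrightarrow> (\<Sum>q\<in>S. kd q p * f q) = f p"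
proof -
  assume "p \<in> S" "finite S"
  have "(\<Sum>q\<in>S. kd q p * f q) = (\<Sum>q\<in>S. if q = p then f q else 0)"
    by (rule sum.cong) (auto simp: kd_def)
  also have "\<dots> = f p" using \<open>p\<in>S\<close> \<open>finite S\<close> by simp
  finally show ?thesis .
qed

lemma mmul_eq: assumes "finite S" "\<And>k. k \<notin> S \<Longrightarrow> A i k = 0"
  shows "mmul A B i j = (\<Sum>k\<in>S. A i k * B k j)"
proof -
  have sub: "{k. A i k \<noteq> 0} \<subseteq> S" using assms(2) by blast
  show ?thesis unfolding mmul_def
    by (rule sum.mono_neutral_left[OF assms(1) sub]) auto
qed

lemma U_out: "A \<in> U_grp n \<Longrightarrow> i \<notin> {1..n} \<or> j \<notin> {1..n} \<Longrightarrow> A i j = kd i j"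
  by (auto simp: U_grp_def)
lemma U_col: "A \<in> U_grp n \<Longrightarrow> i \<in> {1..n} \<Longrightarrow> j \<in> {1..n} \<Longrightarrow> (\<Sum>k=1..n. cnj (A k i) * A k j) = kd i j"
  by (auto simp: U_grp_def)
lemma U_row: "A \<in> U_grp n \<Longrightarrow> i \<in> {1..n} \<Longrightarrow> j \<in> {1..n} \<Longrightarrow> (\<Sum>k=1..n. A i k * cnj (A j k)) = kd i j"
  by (auto simp: U_grp_def)

lemma mmul_U_out: assumes "A \<in> U_grp n" "i \<notin> {1..n}" shows "mmul A B i j = B i j"
proof -
  have "mmul A B i j = (\<Sum>k\<in>{i}. A i k * B k j)"
  proof (rule mmul_eq)
    fix k assume "k \<notin> {i}" thus "A i k = 0" using U_out[OF assms(1), of i k] assms(2) by (simp add: kd_def)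
  qed simp
  thus ?thesis using U_out[OF assms(1)] assms(2) by simp
qed

lemma mmul_U_in: assumes "A \<in> U_grp n" "i \<in> {1..n}" shows "mmul A B i j = (\<Sum>k=1..n. A i k * B k j)"
proof (rule mmul_eq)
  fix k assume "k \<notin> {1..n}" thus "A i k = 0" using U_out[OF assms(1), of i k] assms(2) by (auto simp: kd_def)
qed simp

lemma U_mono: assumes "A \<in> U_grp n" shows "A \<in> U_grp (Suc n)"
proof -
  have nn: "A (Suc n) k = kd (Suc n) k" "A k (Suc n) = kd k (Suc n)" for k using U_out[OF assms] by auto
  have c: "(\<Sum>k=1..Suc n. cnj (A k i) * A k j) = kd i j" if "i \<in> {1..Suc n}" "j \<in> {1..Suc n}" for i j
  proof (cases "i = Suc n \<or> j = Suc n")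
    case True
    then show ?thesis using that nn by (auto simp: kd_def sum.atLeast_Suc_atMost_Suc_shift) 
  next
    case False
    then have "i \<in> {1..n}" "j \<in> {1..n}" using that by auto
    then show ?thesis using U_col[OF assms] nn by (simp add: kd_def)
  qed
  have r: "(\<Sum>k=1..Suc n. A i k * cnj (A j k)) = kd i j" if "i \<in> {1..Suc n}" "j \<in> {1..Suc n}" for i j
  proof (cases "i = Suc n \<or> j = Suc n")
    case True
    then show ?thesis using that nn by (auto simp: kd_def)
  next
    case False
    then have "i \<in> {1..n}" "j \<in> {1..n}" using that by auto
    then show ?thesis using U_row[OF assms] nn by (simp add: kd_def)
  qed
  show ?thesis using c r U_out[OF assms] unfolding U_grp_def by auto
qed



lemma U_mul: assumes A: "A \<in> U_grp N" and B: "B \<in> U_grp N" shows "mmul A B \<in> U_grp N"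
proof -
  let ?C = "mmul A B"
  have Cin: "?C i j = (\<Sum>k=1..N. A i k * B k j)" if "i \<in> {1..N}" for i j using mmul_U_in[OF A that] .
  have out: "?C i j = kd i j" if "i \<notin> {1..N} \<or> j \<notin> {1..N}" for i j
  proof (cases "i \<in> {1..N}")
    case False thus ?thesis using mmul_U_out[OF A False] U_out[OF B] by simp
  next
    case True
    hence j: "j \<notin> {1..N}" using that by blast
    have "?C i j = (\<Sum>k=1..N. A i k * kd k j)" unfolding Cin[OF True]
      by (rule sum.cong) (use U_out[OF B] j in auto)
    also have "\<dots> = 0" using j by (intro sum.neutral) (auto simp: kd_def)
    finally show ?thesis using True j by (auto simp: kd_def)
  qed
  have col: "(\<Sum>k=1..N. cnj (?C k i) * ?C k l) = kd i l" if i: "i \<in> {1..N}" and l: "l \<in> {1..N}" for i l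
  proof -
    have "(\<Sum>k=1..N. cnj (?C k i) * ?C k l) = (\<Sum>k=1..N. (\<Sum>p=1..N. cnj (A k p) * cnj (B p i)) * (\<Sum>q=1..N. A k q * B q l))"
      by (rule sum.cong) (simp_all add: Cin)
    also have "\<dots> = (\<Sum>k=1..N. \<Sum>p=1..N. \<Sum>q=1..N. cnj (B p i) * B q l * (cnj (A k p) * A k q))"
      by (simp add: sum_distrib_left sum_distrib_right mult_ac)
    also have "\<dots> = (\<Sum>p=1..N. \<Sum>k=1..N. \<Sum>q=1..N. cnj (B p i) * B q l * (cnj (A k p) * A k q))" by (rule sum.swap)
    also have "\<dots> = (\<Sum>p=1..N. \<Sum>q=1..N. \<Sum>k=1..N. cnj (B p i) * B q l * (cnj (A k p) * A k q))" by (rule sum.cong[OF refl], rule sum.swap)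
    also have "\<dots> = (\<Sum>p=1..N. \<Sum>q=1..N. cnj (B p i) * B q l * (\<Sum>k=1..N. cnj (A k p) * A k q))"
      by (simp add: sum_distrib_left)
    also have "\<dots> = (\<Sum>p=1..N. \<Sum>q=1..N. cnj (B p i) * B q l * kd p q)"
      by (intro sum.cong refl) (use U_col[OF A] in \<open>simp only: atLeastAtMost_iff[symmetric]\<close>)
    also have "\<dots> = (\<Sum>p=1..N. cnj (B p i) * B p l)"
      by (intro sum.cong refl) (simp add: sum_kd_right)
    also have "\<dots> = kd i l" using U_col[OF B i l] .
    finally show ?thesis .
  qed
  have row: "(\<Sum>k=1..N. ?C i k * cnj (?C l k)) = kd i l" if i: "i \<in> {1..N}" and l: "l \<in> {1..N}" for i l
  proof -
    have "(\<Sum>k=1..N. ?C i k * cnj (?C l k)) = (\<Sum>k=1..N. (\<Sum>p=1..N. A i p * B p k) * (\<Sum>q=1..N. cnj (A l q) * cnj (B q k)))"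
      by (rule sum.cong) (simp_all add: Cin[OF i] Cin[OF l] cnj_sum)
    also have "\<dots> = (\<Sum>k=1..N. \<Sum>p=1..N. \<Sum>q=1..N. A i p * cnj (A l q) * (B p k * cnj (B q k)))"
      by (simp add: sum_distrib_left sum_distrib_right mult_ac, rule sum.cong[OF refl], rule sum.swap)
    also have "\<dots> = (\<Sum>p=1..N. \<Sum>k=1..N. \<Sum>q=1..N. A i p * cnj (A l q) * (B p k * cnj (B q k)))" by (rule sum.swap)
    also have "\<dots> = (\<Sum>p=1..N. \<Sum>q=1..N. \<Sum>k=1..N. A i p * cnj (A l q) * (B p k * cnj (B q k)))" by (rule sum.cong[OF refl], rule sum.swap)
    also have "\<dots> = (\<Sum>p=1..N. \<Sum>q=1..N. A i p * cnj (A l q) * (\<Sum>k=1..N. B p k * cnj (B q k)))"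
      by (simp add: sum_distrib_left)
    also have "\<dots> = (\<Sum>p=1..N. \<Sum>q=1..N. A i p * cnj (A l q) * kd p q)"
      by (intro sum.cong refl) (use U_row[OF B] in \<open>simp only: atLeastAtMost_iff[symmetric]\<close>)
    also have "\<dots> = (\<Sum>p=1..N. A i p * cnj (A l p))"
      by (intro sum.cong refl) (simp add: sum_kd_right)
    also have "\<dots> = kd i l" using U_row[OF A i l] .
    finally show ?thesis .
  qed
  show ?thesis unfolding U_grp_def using out col row by blast
qed



definition yv :: "nat \<Rightarrow> cvec \<Rightarrow> cvec" where "yv j x = (\<lambda>i. x i - kd i j)"
definition bet :: "nat \<Rightarrow> cvec \<Rightarrow> complex" where "bet j x = 1 / (cnj (x j) - 1)"
definition reflm :: "nat \<Rightarrow> cvec \<Rightarrow> cmat" where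
  "reflm j x = (\<lambda>i k. kd i k + bet j x * yv j x i * cnj (yv j x k))"

lemma kd_sym: "kd i j = kd j i" by (auto simp: kd_def)
lemma cnj_kd[simp]: "cnj (kd i j) = kd i j" by (auto simp: kd_def)

lemma sum_kd_pert: assumes "finite S" "i \<in> S" "l \<in> S"
  shows "(\<Sum>k\<in>S. (kd k i + p k) * (kd k l + q k)) = kd i l + q i + p l + (\<Sum>k\<in>S. p k * q k)"
proof -
  have "(\<Sum>k\<in>S. (kd k i + p k) * (kd k l + q k)) =
     (\<Sum>k\<in>S. kd k i * kd k l) + (\<Sum>k\<in>S. kd k i * q k) + (\<Sum>k\<in>S. p k * kd k l) + (\<Sum>k\<in>S. p k * q k)"
    by (simp add: algebra_simps sum.distrib)
  also have "(\<Sum>k\<in>S. kd k i * kd k l) = kd i l" using sum_kd_left[OF assms(2,1), of "\<lambda>k. kd k l"] by simp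
  also have "(\<Sum>k\<in>S. kd k i * q k) = q i" using sum_kd_left[OF assms(2,1)] .
  also have "(\<Sum>k\<in>S. p k * kd k l) = p l" using sum_kd_right[OF assms(3,1), of p] by (simp add: kd_sym)
  finally show ?thesis .
qed

lemma sph_out: "x \<in> sphere_n j \<Longrightarrow> i \<notin> {1..j} \<Longrightarrow> x i = 0" by (auto simp: sphere_n_def)

lemma sph_norm: assumes "x \<in> sphere_n j" shows "(\<Sum>k=1..j. cnj (x k) * x k) = 1"
proof -
  have "(\<Sum>k=1..j. cnj (x k) * x k) = (\<Sum>k=1..j. complex_of_real ((cmod (x k))\<^sup>2))"
    by (rule sum.cong) (simp_all add: complex_norm_square[symmetric] mult.commute del: of_real_power)
  also have "\<dots> = complex_of_real (\<Sum>k=1..j. (cmod (x k))\<^sup>2)" by simp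
  also have "\<dots> = 1" using assms by (simp add: sphere_n_def)
  finally show ?thesis .
qed

lemma sph_j: assumes "x \<in> sphere_n j" shows "j \<in> {1..j}"
proof (rule ccontr)
  assume "j \<notin> {1..j}" hence "j = 0" by auto
  thus False using assms by (simp add: sphere_n_def)
qed

lemma sph_one: assumes x: "x \<in> sphere_n j" and xj: "x j = 1" shows "x = evec j"
proof -
  have jj: "j \<in> {1..j}" using sph_j[OF x] .
  have s: "(\<Sum>i=1..j. (cmod (x i))\<^sup>2) = 1" using x by (simp add: sphere_n_def)
  also have "(\<Sum>i=1..j. (cmod (x i))\<^sup>2) = (cmod (x j))\<^sup>2 + (\<Sum>i\<in>{1..j}-{j}. (cmod (x i))\<^sup>2)"
    using sum.remove[OF _ jj, of "\<lambda>i. (cmod (x i))\<^sup>2"] by simp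
  finally have "(\<Sum>i\<in>{1..j}-{j}. (cmod (x i))\<^sup>2) = 0" using xj by simp
  hence z: "\<forall>i\<in>{1..j}-{j}. (cmod (x i))\<^sup>2 = 0" by (subst sum_nonneg_eq_0_iff[symmetric]) auto
  show ?thesis
  proof
    fix i show "x i = evec j i"
      using z sph_out[OF x, of i] xj by (cases "i \<in> {1..j}") (auto simp: evec_def)
  qed
qed

lemma sph_xy: assumes x: "x \<in> sphere_n j" shows "(\<Sum>k=1..j. cnj (x k) * yv j x k) = 1 - cnj (x j)"
proof -
  have "(\<Sum>k=1..j. cnj (x k) * yv j x k) = (\<Sum>k=1..j. cnj (x k) * x k) - (\<Sum>k=1..j. cnj (x k) * kd k j)"
    by (simp add: yv_def algebra_simps sum_subtractf)
  thus ?thesis using sph_norm[OF x] sum_kd_right[OF sph_j[OF x], of "\<lambda>k. cnj (x k)"] by (simp add: kd_sym)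
qed

lemma sph_yy: assumes x: "x \<in> sphere_n j" shows "(\<Sum>k=1..j. cnj (yv j x k) * yv j x k) = 2 - x j - cnj (x j)"
proof -
  have "(\<Sum>k=1..j. cnj (yv j x k) * yv j x k) = (\<Sum>k=1..j. cnj (x k) * yv j x k - kd k j * yv j x k)"
    by (rule sum.cong) (simp_all add: yv_def algebra_simps)
  also have "\<dots> = (\<Sum>k=1..j. cnj (x k) * yv j x k) - (\<Sum>k=1..j. kd k j * yv j x k)"
    by (rule sum_subtractf)
  also have "(\<Sum>k=1..j. kd k j * yv j x k) = yv j x j" by (rule sum_kd_left[OF sph_j[OF x]]) simp
  finally show ?thesis using sph_xy[OF x] by (simp add: yv_def)
qed

lemma bet_id: assumes "w \<noteq> 1" shows "1/(cnj w - 1) + cnj (1/(cnj w - 1)) + cnj (1/(cnj w - 1)) * (1/(cnj w - 1)) * (2 - w - cnj w) = 0"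
proof -
  have a: "w - 1 \<noteq> 0" using assms by simp
  have b: "cnj w - 1 \<noteq> 0" using assms by (metis complex_cnj_cnj complex_cnj_one eq_iff_diff_eq_0)
  show ?thesis using a b by (simp add: field_simps) (simp add: add_divide_distrib[symmetric])
qed



lemma Idm_U: "Idm \<in> U_grp n"
proof -
  have c: "(\<Sum>k=1..n. cnj (kd k i) * kd k j) = kd i j" if "i \<in> {1..n}" for i j
    using sum_kd_left[OF that, of "\<lambda>k. kd k j"] by simp
  have r: "(\<Sum>k=1..n. kd i k * cnj (kd j k)) = kd i j" if "j \<in> {1..n}" for i j
    using sum_kd_left[OF that, of "\<lambda>k. kd i k"] by (simp add: kd_sym mult.commute)
  show ?thesis unfolding U_grp_def Idm_def using c r by auto
qed

lemma yv_out: "x \<in> sphere_n j \<Longrightarrow> i \<notin> {1..j} \<Longrightarrow> yv j x i = 0"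
  using sph_out[of x j i] sph_j[of x j] by (auto simp: yv_def kd_def)

lemma yv_zero: "x = evec j \<Longrightarrow> yv j x = (\<lambda>_. 0)"
  by (auto simp: yv_def evec_def kd_def)

lemma reflm_evec: "reflm j (evec j) = Idm"
  by (simp add: reflm_def yv_zero Idm_def)

lemma reflm_col: assumes x: "x \<in> sphere_n j" shows "reflm j x i j = x i"
proof (cases "x j = 1")
  case True
  hence "x = evec j" using sph_one[OF x] by simp
  thus ?thesis by (simp only: reflm_evec) (simp add: Idm_def evec_def kd_def)
next
  case False
  have b: "cnj (x j) - 1 \<noteq> 0" using False by (metis complex_cnj_cnj complex_cnj_one eq_iff_diff_eq_0)
  have "bet j x * cnj (yv j x j) = 1" using b by (simp add: bet_def yv_def)
  have "reflm j x i j = kd i j + yv j x i * (bet j x * cnj (yv j x j))" by (simp add: reflm_def mult_ac)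
  also have "\<dots> = x i" using \<open>bet j x * cnj (yv j x j) = 1\<close> by (simp add: yv_def)
  finally show ?thesis .
qed

lemma reflm_U: assumes x: "x \<in> sphere_n j" shows "reflm j x \<in> U_grp j"
proof (cases "x j = 1")
  case True
  hence "x = evec j" using sph_one[OF x] by simp
  thus ?thesis by (simp add: reflm_evec Idm_U)
next
  case False
  define y where "y = yv j x"
  define \<beta> where "\<beta> = bet j x"
  have R: "reflm j x i k = kd i k + \<beta> * y i * cnj (y k)" for i k by (simp add: reflm_def y_def \<beta>_def)
  have id: "\<beta> + cnj \<beta> + cnj \<beta> * \<beta> * (2 - x j - cnj (x j)) = 0"
    unfolding \<beta>_def bet_def by (rule bet_id[OF False])
  have S: "(\<Sum>k=1..j. cnj (y k) * y k) = 2 - x j - cnj (x j)" unfolding y_def by (rule sph_yy[OF x])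
  have out: "reflm j x i k = kd i k" if "i \<notin> {1..j} \<or> k \<notin> {1..j}" for i k
    using that yv_out[OF x] by (auto simp: R y_def)
  have col: "(\<Sum>k=1..j. cnj (reflm j x k i) * reflm j x k l) = kd i l" if i: "i \<in> {1..j}" and l: "l \<in> {1..j}" for i l
  proof -
    have "(\<Sum>k=1..j. cnj (reflm j x k i) * reflm j x k l) =
        (\<Sum>k=1..j. (kd k i + cnj \<beta> * cnj (y k) * y i) * (kd k l + \<beta> * y k * cnj (y l)))"
      by (simp add: R)
    also have "\<dots> = kd i l + \<beta> * y i * cnj (y l) + cnj \<beta> * cnj (y l) * y i +
        (\<Sum>k=1..j. (cnj \<beta> * cnj (y k) * y i) * (\<beta> * y k * cnj (y l)))"
      by (rule sum_kd_pert) (use i l in auto)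
    also have "(\<Sum>k=1..j. (cnj \<beta> * cnj (y k) * y i) * (\<beta> * y k * cnj (y l))) =
        cnj \<beta> * \<beta> * y i * cnj (y l) * (\<Sum>k=1..j. cnj (y k) * y k)"
      by (simp add: sum_distrib_left mult_ac)
    finally have "(\<Sum>k=1..j. cnj (reflm j x k i) * reflm j x k l) =
        kd i l + y i * cnj (y l) * (\<beta> + cnj \<beta> + cnj \<beta> * \<beta> * (2 - x j - cnj (x j)))"
      unfolding S by (simp add: algebra_simps)
    thus ?thesis using id by simp
  qed
  have row: "(\<Sum>k=1..j. reflm j x i k * cnj (reflm j x l k)) = kd i l" if i: "i \<in> {1..j}" and l: "l \<in> {1..j}" for i l
  proof -
    have "(\<Sum>k=1..j. reflm j x i k * cnj (reflm j x l k)) =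
        (\<Sum>k=1..j. (kd k i + \<beta> * y i * cnj (y k)) * (kd k l + cnj \<beta> * cnj (y l) * y k))"
      by (simp add: R kd_sym[of i] kd_sym[of l])
    also have "\<dots> = kd i l + cnj \<beta> * cnj (y l) * y i + \<beta> * y i * cnj (y l) +
        (\<Sum>k=1..j. (\<beta> * y i * cnj (y k)) * (cnj \<beta> * cnj (y l) * y k))"
      by (rule sum_kd_pert) (use i l in auto)
    also have "(\<Sum>k=1..j. (\<beta> * y i * cnj (y k)) * (cnj \<beta> * cnj (y l) * y k)) =
        cnj \<beta> * \<beta> * y i * cnj (y l) * (\<Sum>k=1..j. cnj (y k) * y k)"
      by (simp add: sum_distrib_left mult_ac)
    finally have "(\<Sum>k=1..j. reflm j x i k * cnj (reflm j x l k)) =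
        kd i l + y i * cnj (y l) * (\<beta> + cnj \<beta> + cnj \<beta> * \<beta> * (2 - x j - cnj (x j)))"
      unfolding S by (simp add: algebra_simps)
    thus ?thesis using id by simp
  qed
  show ?thesis unfolding U_grp_def using out col row by blast
qed



lemma cnj_ne1: "w \<noteq> 1 \<Longrightarrow> cnj w - 1 \<noteq> 0"
  by (metis complex_cnj_cnj complex_cnj_one eq_iff_diff_eq_0)

lemma bet_yj: "x j \<noteq> 1 \<Longrightarrow> bet j x * cnj (yv j x j) = 1"
  using cnj_ne1[of "x j"] by (simp add: bet_def yv_def)

lemma y_nz: assumes "x \<noteq> evec j" obtains i where "yv j x i \<noteq> 0"
proof -
  from assms obtain i where "x i \<noteq> evec j i" by auto
  hence "yv j x i \<noteq> 0" by (auto simp: yv_def evec_def kd_def)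
  thus ?thesis using that by blast
qed

lemma reflm_rank1: assumes x: "x \<in> sphere_n j" and ne: "x \<noteq> evec j" shows "rank_one_pert (reflm j x)"
proof -
  have xj: "x j \<noteq> 1" using sph_one[OF x] ne by auto
  obtain i0 where i0: "yv j x i0 \<noteq> 0" using y_nz[OF ne] by blast
  show ?thesis unfolding rank_one_pert_def
  proof (intro exI conjI allI)
    show "yv j x \<noteq> (\<lambda>_. 0)" using i0 by auto
    show "(\<lambda>k. bet j x * cnj (yv j x k)) \<noteq> (\<lambda>_. 0)"
    proof
      assume "(\<lambda>k. bet j x * cnj (yv j x k)) = (\<lambda>_. 0)"
      hence "bet j x * cnj (yv j x j) = 0" by meson
      thus False using bet_yj[of x j, OF xj] by simp
    qed
    fix i k show "reflm j x i k - kd i k = yv j x i * (bet j x * cnj (yv j x k))"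
      by (simp add: reflm_def mult_ac)
  qed
qed

lemma refl_unique: assumes x: "x \<in> sphere_n j" and ne: "x \<noteq> evec j"
  and r: "r \<in> U_grp j" and r1: "rank_one_pert r" and rc: "\<forall>i. r i j = x i"
  shows "r = reflm j x"
proof -
  have xj: "x j \<noteq> 1" using sph_one[OF x] ne by auto
  have jj: "j \<in> {1..j}" using sph_j[OF x] .
  define y where "y = yv j x"
  define \<beta> where "\<beta> = bet j x"
  obtain a b where ab: "\<And>i k. r i k - kd i k = a i * b k" using r1 unfolding rank_one_pert_def by blast
  have ya: "y i = a i * b j" for i using ab[of i j] rc by (simp add: y_def yv_def)
  obtain i0 where i0: "y i0 \<noteq> 0" using y_nz[OF ne] y_def by blast
  have bj: "b j \<noteq> 0" using i0 ya[of i0] by auto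
  define c where "c k = b k / b j" for k
  have rk: "r i k = kd i k + y i * c k" for i k
    using ab[of i k] ya[of i] bj by (simp add: c_def field_simps)
  have cj: "c j = 1" using bj by (simp add: c_def)
  have ck: "c k = \<beta> * cnj (y k)" for k
  proof (cases "k \<in> {1..j}")
    case False
    have "r i0 k = kd i0 k" using U_out[OF r] False by blast
    hence "y i0 * c k = 0" using rk[of i0 k] by simp
    hence "c k = 0" using i0 by simp
    moreover have "y k = 0" using yv_out[OF x False] y_def by simp
    ultimately show ?thesis by simp
  next
    case True
    show ?thesis
    proof (cases "k = j")
      case True thus ?thesis using cj bet_yj[of x j, OF xj] by (simp add: y_def \<beta>_def)
    next
      case False
      have "0 = (\<Sum>l=1..j. cnj (r l j) * r l k)" using U_col[OF r jj \<open>k\<in>{1..j}\<close>] False by simp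
      also have "\<dots> = (\<Sum>l=1..j. cnj (x l) * kd k l + c k * (cnj (x l) * y l))"
        by (rule sum.cong, simp, simp only: rc, simp add: rk algebra_simps kd_sym[of k])
      also have "\<dots> = (\<Sum>l=1..j. cnj (x l) * kd k l) + c k * (\<Sum>l=1..j. cnj (x l) * y l)"
        by (simp add: sum.distrib sum_distrib_left)
      also have "\<dots> = cnj (x k) + c k * (1 - cnj (x j))"
        using sum_kd_right[OF \<open>k\<in>{1..j}\<close>, of "\<lambda>l. cnj (x l)"] sph_xy[OF x] by (simp add: y_def)
      finally have e: "cnj (x k) + c k * (1 - cnj (x j)) = 0" by simp
      have d: "cnj (x j) - 1 \<noteq> 0" using cnj_ne1[OF xj] .
      have "y k = x k" using False by (simp add: y_def yv_def)
      thus ?thesis using e d unfolding \<beta>_def bet_def by (simp add: field_simps)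
    qed
  qed
  show ?thesis
  proof (intro ext)
    fix i k show "r i k = reflm j x i k"
      using rk[of i k] ck[of k] by (simp add: reflm_def y_def \<beta>_def mult_ac)
  qed
qed

lemma refl_to_eq: assumes x: "x \<in> sphere_n j" and ne: "x \<noteq> evec j" shows "refl_to j x = reflm j x"
  unfolding refl_to_def
proof (rule the_equality)
  show "reflm j x \<in> U_grp j \<and> rank_one_pert (reflm j x) \<and> (\<forall>i. reflm j x i j = x i)"
    using reflm_U[OF x] reflm_rank1[OF x ne] reflm_col[OF x] by blast
  fix r assume "r \<in> U_grp j \<and> rank_one_pert r \<and> (\<forall>i. r i j = x i)"
  thus "r = reflm j x" using refl_unique[OF x ne] by blast
qed

lemma r_op_eq: assumes x: "x \<in> sphere_n j" shows "r_op j x = reflm j x"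
  using refl_to_eq[OF x] reflm_evec by (auto simp: r_op_def)



lemma sum_cnj_zero: assumes "finite S" "(\<Sum>k\<in>S. cnj (f k) * f k) = 0" "k \<in> S" shows "f k = 0"
proof -
  have "(\<Sum>k\<in>S. cnj (f k) * f k) = complex_of_real (\<Sum>k\<in>S. (cmod (f k))\<^sup>2)"
    by (simp add: complex_norm_square[symmetric] mult.commute del: of_real_power)
  hence "(\<Sum>k\<in>S. (cmod (f k))\<^sup>2) = 0" using assms(2) by (metis of_real_eq_0_iff)
  hence "\<forall>k\<in>S. (cmod (f k))\<^sup>2 = 0" using assms(1) by (subst sum_nonneg_eq_0_iff[symmetric]) auto
  thus ?thesis using assms(3) by simp
qed

lemma range_cond_Suc: "range_cond (Suc m) m u v \<longleftrightarrow>
   (\<forall>j. \<exists>c. \<forall>i. u i j - v i j = c * (u i (Suc m) - kd i (Suc m)))"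
proof -
  have e: "{m<..Suc m} = {Suc m}" by auto
  show ?thesis unfolding range_cond_def e
    apply simp
    apply (rule iffI)
     apply blast
    apply (intro allI)
    apply (erule_tac x=j in allE)
    apply (erule exE)
    apply (rule_tac x="\<lambda>_. c" in exI)
    apply simp
    done
qed

lemma col_fixed: assumes u: "u \<in> U_grp (Suc m)" and one: "u (Suc m) (Suc m) = 1"
  shows "u i (Suc m) = kd i (Suc m)"
proof -
  let ?N = "Suc m"
  have N: "?N \<in> {1..?N}" by simp
  have "(\<Sum>k=1..?N. cnj (u k ?N) * u k ?N) = 1" using U_col[OF u N N] by simp
  hence s: "(\<Sum>k=1..m. cnj (u k ?N) * u k ?N) = 0" using one by simp
  show ?thesis
  proof (cases "i \<in> {1..m}")
    case True thus ?thesis using sum_cnj_zero[OF _ s True] by simp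
  next
    case False thus ?thesis using one U_out[OF u] by (cases "i = ?N") auto
  qed
qed

lemma row_fixed: assumes u: "u \<in> U_grp (Suc m)" and one: "u (Suc m) (Suc m) = 1"
  shows "u (Suc m) j = kd (Suc m) j"
proof -
  let ?N = "Suc m"
  have N: "?N \<in> {1..?N}" by simp
  have "(\<Sum>k=1..?N. cnj (cnj (u ?N k)) * cnj (u ?N k)) = 1" using U_row[OF u N N] by (simp add: mult.commute)
  hence s: "(\<Sum>k=1..m. cnj (cnj (u ?N k)) * cnj (u ?N k)) = 0" using one by simp
  show ?thesis
  proof (cases "j \<in> {1..m}")
    case True thus ?thesis using sum_cnj_zero[OF _ s True] by simp
  next
    case False thus ?thesis using one U_out[OF u] by (cases "j = ?N") auto
  qed
qed

lemma pi_unique: assumes u: "u \<in> U_grp (Suc m)" and v: "v \<in> U_grp m" and rc: "range_cond (Suc m) m u v"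
  shows "pi_proj (Suc m) m u = v"
  unfolding pi_proj_def
proof (rule the_equality)
  show "v \<in> U_grp m \<and> range_cond (Suc m) m u v" using v rc by blast
  fix v' assume "v' \<in> U_grp m \<and> range_cond (Suc m) m u v'"
  hence v': "v' \<in> U_grp m" and rc': "range_cond (Suc m) m u v'" by auto
  let ?N = "Suc m"
  show "v' = v"
  proof (intro ext)
    fix i j
    obtain c where c: "\<And>i. u i j - v i j = c * (u i ?N - kd i ?N)" using rc unfolding range_cond_Suc by blast
    obtain c' where c': "\<And>i. u i j - v' i j = c' * (u i ?N - kd i ?N)" using rc' unfolding range_cond_Suc by blast
    have dv: "v' i j - v i j = (c - c') * (u i ?N - kd i ?N)" for i
    proof -
      have "v' i j - v i j = (u i j - v i j) - (u i j - v' i j)" by simp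
      also have "\<dots> = c * (u i ?N - kd i ?N) - c' * (u i ?N - kd i ?N)" by (simp only: c c')
      finally show ?thesis by (simp add: algebra_simps)
    qed
    show "v' i j = v i j"
    proof (cases "u ?N ?N = 1")
      case True
      thus ?thesis using dv[of i] col_fixed[OF u True, of i] by simp
    next
      case False
      have "v' ?N j = v ?N j" using U_out[OF v] U_out[OF v'] by simp
      hence "c = c'" using dv[of ?N] False by simp
      thus ?thesis using dv[of i] by simp
    qed
  qed
qed

lemma mmul_reflm: assumes x: "x \<in> sphere_n N"
  shows "mmul (reflm N x) B i j = B i j + bet N x * yv N x i * (\<Sum>k=1..N. cnj (yv N x k) * B k j)"
proof (cases "i \<in> {1..N}")
  case False
  thus ?thesis using mmul_U_out[OF reflm_U[OF x] False] yv_out[OF x False] by simp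
next
  case True
  have "mmul (reflm N x) B i j = (\<Sum>k=1..N. kd k i * B k j + bet N x * yv N x i * (cnj (yv N x k) * B k j))"
    unfolding mmul_U_in[OF reflm_U[OF x] True]
    by (rule sum.cong) (simp_all add: reflm_def algebra_simps kd_sym[of i])
  also have "\<dots> = B i j + bet N x * yv N x i * (\<Sum>k=1..N. cnj (yv N x k) * B k j)"
    using sum_kd_left[OF True, of "\<lambda>k. B k j"] by (simp add: sum.distrib sum_distrib_left)
  finally show ?thesis .
qed

lemma step_down: assumes v: "v \<in> U_grp n" and x: "x \<in> sphere_n (Suc n)"
  shows "mmul (reflm (Suc n) x) v \<in> U_grp (Suc n)"
    and "\<forall>i. mmul (reflm (Suc n) x) v i (Suc n) = x i"
    and "pi_proj (Suc n) n (mmul (reflm (Suc n) x) v) = v"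
proof -
  let ?N = "Suc n" let ?u = "mmul (reflm (Suc n) x) v"
  show U: "?u \<in> U_grp ?N" using U_mul[OF reflm_U[OF x] U_mono[OF v]] .
  have vN: "v k ?N = kd k ?N" for k using U_out[OF v] by simp
  have sN: "(\<Sum>k=1..?N. cnj (yv ?N x k) * v k ?N) = cnj (yv ?N x ?N)"
    unfolding vN using sum_kd_right[of ?N "{1..?N}" "\<lambda>k. cnj (yv ?N x k)"] by (simp add: kd_sym)
  have colN: "?u i ?N = x i" for i
  proof -
    have "?u i ?N = kd i ?N + bet ?N x * yv ?N x i * cnj (yv ?N x ?N)"
      using mmul_reflm[OF x] sN vN by simp
    also have "\<dots> = reflm ?N x i ?N" by (simp add: reflm_def)
    finally show ?thesis using reflm_col[OF x] by simp
  qed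
  thus "\<forall>i. ?u i ?N = x i" by blast
  have rc: "range_cond ?N n ?u v" unfolding range_cond_Suc
  proof
    fix j
    show "\<exists>c. \<forall>i. ?u i j - v i j = c * (?u i ?N - kd i ?N)"
    proof (intro exI allI)
      fix i
      show "?u i j - v i j = (bet ?N x * (\<Sum>k=1..?N. cnj (yv ?N x k) * v k j)) * (?u i ?N - kd i ?N)"
      proof -
        have "?u i j - v i j = bet ?N x * yv ?N x i * (\<Sum>k=1..?N. cnj (yv ?N x k) * v k j)"
          using mmul_reflm[OF x, of v i j] by simp
        moreover have "?u i ?N - kd i ?N = yv ?N x i" using colN by (simp add: yv_def)
        ultimately show ?thesis by (simp add: mult_ac)
      qed
    qed
  qed
  show "pi_proj ?N n ?u = v" by (rule pi_unique[OF U v rc])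
qed



definition wm :: "cmat \<Rightarrow> cvec \<Rightarrow> nat \<Rightarrow> cmat" where
  "wm u x N = (\<lambda>i j. if j = N then kd i N else u i j - yv N x i * (u N j / (x N - 1)))"

lemma id1: assumes "w \<noteq> 1" shows "1/(w-1) + 1/(cnj w - 1) + (2 - w - cnj w)/((cnj w - 1)*(w - 1)) = (0::complex)"
proof -
  have acoef: "w - 1 \<noteq> 0" using assms by simp
  have b: "cnj w - 1 \<noteq> 0" using cnj_ne1[OF assms] .
  show ?thesis using acoef b by (simp add: field_simps) (simp add: add_divide_distrib[symmetric] algebra_simps)
qed

lemma id2: assumes "w \<noteq> 1" shows "-1 + cnj w/(cnj w - 1) + w/(w-1) + (1 - w * cnj w)/((w-1)*(cnj w - 1)) = (0::complex)"
proof -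
  have acoef: "w - 1 \<noteq> 0" using assms by simp
  have b: "cnj w - 1 \<noteq> 0" using cnj_ne1[OF assms] .
  show ?thesis using acoef b by (simp add: field_simps) (simp add: add_divide_distrib[symmetric] algebra_simps)
qed

lemma id3: assumes "w \<noteq> 1" shows "(t::complex)/(w-1) = (1/(cnj w - 1)) * (- t - t/(w-1) * (2 - w - cnj w))"
proof -
  have acoef: "w - 1 \<noteq> 0" using assms by simp
  have b: "cnj w - 1 \<noteq> 0" using cnj_ne1[OF assms] .
  have "(w - 1) * (cnj w - 1) \<noteq> 0" using acoef b by simp
  hence d: "1 + w * cnj w - (w + cnj w) \<noteq> 0" by (simp add: algebra_simps)
  show ?thesis using acoef b d by (simp add: field_simps)
qed

context
  fixes u x n
  assumes u: "u \<in> U_grp (Suc n)" and x: "x \<in> sphere_n (Suc n)" and ucol: "\<And>i. u i (Suc n) = x i"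
begin

abbreviation "NG \<equiv> Suc n"
abbreviation "yG \<equiv> yv NG x"
definition "acoef j = u NG j / (x NG - 1)"

lemma NN: "NG \<in> {1..NG}" by simp

lemma wm_eq: "j \<noteq> NG \<Longrightarrow> wm u x NG i j = u i j - yG i * acoef j"
  by (simp add: wm_def acoef_def)

lemma y_small: "i \<in> {1..n} \<Longrightarrow> yG i = x i" by (auto simp: yv_def kd_def)

lemma ev: "x NG = 1 \<Longrightarrow> x = evec NG" using sph_one[OF x] .

lemma a_zero: "x NG = 1 \<Longrightarrow> acoef j = 0" by (simp add: acoef_def)

lemma wm_Nrow: assumes "j \<noteq> NG" shows "wm u x NG NG j = 0"
proof (cases "x NG = 1")
  case True
  have "u NG NG = 1" using True ucol by simp
  hence "u NG j = 0" using row_fixed[OF u] assms by simp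
  thus ?thesis using assms by (simp add: wm_def)
next
  case False
  have "yG NG = x NG - 1" by (simp add: yv_def)
  thus ?thesis using assms False by (simp add: wm_def)
qed

lemma F1: assumes j: "j \<in> {1..n}" shows "(\<Sum>k=1..NG. cnj (yG k) * u k j) = - u NG j"
proof -
  have jN: "j \<in> {1..NG}" using j by auto
  have "(\<Sum>k=1..NG. cnj (yG k) * u k j) = (\<Sum>k=1..NG. cnj (u k NG) * u k j) - (\<Sum>k=1..NG. kd k NG * u k j)"
    by (simp add: yv_def ucol algebra_simps sum_subtractf)
  also have "(\<Sum>k=1..NG. cnj (u k NG) * u k j) = 0" using U_col[OF u NN jN] j by simp
  also have "(\<Sum>k=1..NG. kd k NG * u k j) = u NG j" by (rule sum_kd_left[OF NN]) simp
  finally show ?thesis by simp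
qed

lemma F3: assumes i: "i \<in> {1..n}" and l: "l \<in> {1..n}"
  shows "(\<Sum>k=1..n. u i k * cnj (u l k)) = kd i l - x i * cnj (x l)"
proof -
  have "(\<Sum>k=1..NG. u i k * cnj (u l k)) = kd i l" using U_row[OF u] i l by simp
  thus ?thesis using ucol by (simp add: sum.cl_ivl_Suc eq_diff_eq)
qed

lemma F3N: assumes i: "i \<in> {1..n}"
  shows "(\<Sum>k=1..n. u i k * cnj (u NG k)) = - x i * cnj (x NG)"
proof -
  have "(\<Sum>k=1..NG. u i k * cnj (u NG k)) = kd i NG" using U_row[OF u] i by simp
  thus ?thesis using ucol i by (simp add: sum.cl_ivl_Suc add_eq_0_iff2)
qed

lemma F3NN: "(\<Sum>k=1..n. u NG k * cnj (u NG k)) = 1 - x NG * cnj (x NG)"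
proof -
  have "(\<Sum>k=1..NG. u NG k * cnj (u NG k)) = 1" using U_row[OF u NN NN] by simp
  thus ?thesis using ucol by (simp add: sum.cl_ivl_Suc eq_diff_eq)
qed


lemma x_small: "x NG = 1 \<Longrightarrow> i \<in> {1..n} \<Longrightarrow> x i = 0"
  using ev by (auto simp: evec_def)

lemma wm_out: assumes "i \<notin> {1..n} \<or> j \<notin> {1..n}" shows "wm u x NG i j = kd i j"
proof (cases "j = NG")
  case True thus ?thesis by (simp add: wm_def)
next
  case jN: False
  show ?thesis
  proof (cases "j \<in> {1..n}")
    case False
    hence "j \<notin> {1..NG}" using jN by auto
    hence "u i j = kd i j" "u NG j = 0" using U_out[OF u] jN by auto
    thus ?thesis using jN by (simp add: wm_def)
  next
    case True
    hence i: "i \<notin> {1..n}" using assms by blast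
    show ?thesis
    proof (cases "i = NG")
      case True thus ?thesis using wm_Nrow jN by simp
    next
      case False
      hence iN: "i \<notin> {1..NG}" using i by auto
      hence "u i j = kd i j" "yG i = 0" using U_out[OF u] yv_out[OF x iN] by auto
      thus ?thesis using jN by (simp add: wm_def)
    qed
  qed
qed

lemma wm_col: assumes i: "i \<in> {1..n}" and l: "l \<in> {1..n}"
  shows "(\<Sum>k=1..n. cnj (wm u x NG k i) * wm u x NG k l) = kd i l"
proof -
  have iN: "i \<noteq> NG" "l \<noteq> NG" using i l by auto
  have "(\<Sum>k=1..n. cnj (wm u x NG k i) * wm u x NG k l) = (\<Sum>k=1..NG. cnj (wm u x NG k i) * wm u x NG k l)"
    using wm_Nrow[OF iN(1)] by (simp add: sum.cl_ivl_Suc)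
  also have "\<dots> = (\<Sum>k=1..NG. cnj (u k i) * u k l - acoef l * (cnj (u k i) * yG k) - cnj (acoef i) * (cnj (yG k) * u k l) + cnj (acoef i) * acoef l * (cnj (yG k) * yG k))"
    by (rule sum.cong) (simp_all add: wm_eq iN algebra_simps)
  also have "\<dots> = (\<Sum>k=1..NG. cnj (u k i) * u k l) - acoef l * (\<Sum>k=1..NG. cnj (u k i) * yG k) - cnj (acoef i) * (\<Sum>k=1..NG. cnj (yG k) * u k l) + cnj (acoef i) * acoef l * (\<Sum>k=1..NG. cnj (yG k) * yG k)"
    by (simp add: sum.distrib sum_subtractf sum_distrib_left del: sum.cl_ivl_Suc)
  also have "(\<Sum>k=1..NG. cnj (u k i) * u k l) = kd i l" using U_col[OF u] i l by simp
  also have "(\<Sum>k=1..NG. cnj (u k i) * yG k) = - cnj (u NG i)"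
  proof -
    have "(\<Sum>k=1..NG. cnj (u k i) * yG k) = cnj (\<Sum>k=1..NG. cnj (yG k) * u k i)" by (simp add: cnj_sum mult.commute del: sum.cl_ivl_Suc)
    also have "\<dots> = cnj (- u NG i)" using F1[OF i] by (simp del: sum.cl_ivl_Suc)
    finally show ?thesis by simp
  qed
  also have "(\<Sum>k=1..NG. cnj (yG k) * u k l) = - u NG l" using F1[OF l] .
  also have "(\<Sum>k=1..NG. cnj (yG k) * yG k) = 2 - x NG - cnj (x NG)" using sph_yy[OF x] .
  finally have E: "(\<Sum>k=1..n. cnj (wm u x NG k i) * wm u x NG k l) =
     kd i l + (acoef l * cnj (u NG i) + cnj (acoef i) * u NG l + cnj (acoef i) * acoef l * (2 - x NG - cnj (x NG)))"
    by (simp add: algebra_simps)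
  show ?thesis
  proof (cases "x NG = 1")
    case True thus ?thesis using E a_zero by simp
  next
    case False
    have d1: "x NG - 1 \<noteq> 0" using False by simp
    have d2: "cnj (x NG) - 1 \<noteq> 0" using cnj_ne1[OF False] .
    have "acoef l * cnj (u NG i) + cnj (acoef i) * u NG l + cnj (acoef i) * acoef l * (2 - x NG - cnj (x NG)) =
      cnj (u NG i) * u NG l * (1/(x NG - 1) + 1/(cnj (x NG) - 1) + (2 - x NG - cnj (x NG))/((cnj (x NG) - 1)*(x NG - 1)))"
      using d1 d2 by (simp add: acoef_def field_simps)
    also have "\<dots> = 0" using id1[OF False] by simp
    finally show ?thesis using E by simp
  qed
qed

lemma wm_row: assumes i: "i \<in> {1..n}" and l: "l \<in> {1..n}"
  shows "(\<Sum>k=1..n. wm u x NG i k * cnj (wm u x NG l k)) = kd i l"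
proof -
  have yi: "yG i = x i" "yG l = x l" using y_small i l by auto
  have "(\<Sum>k=1..n. wm u x NG i k * cnj (wm u x NG l k)) =
     (\<Sum>k=1..n. u i k * cnj (u l k) - cnj (x l) * (u i k * cnj (acoef k)) - x i * (acoef k * cnj (u l k)) + x i * cnj (x l) * (acoef k * cnj (acoef k)))"
    by (rule sum.cong) (simp_all add: wm_eq yi algebra_simps)
  also have "\<dots> = (\<Sum>k=1..n. u i k * cnj (u l k)) - cnj (x l) * (\<Sum>k=1..n. u i k * cnj (acoef k)) - x i * (\<Sum>k=1..n. acoef k * cnj (u l k)) + x i * cnj (x l) * (\<Sum>k=1..n. acoef k * cnj (acoef k))"
    by (simp add: sum.distrib sum_subtractf sum_distrib_left)
  also have "(\<Sum>k=1..n. u i k * cnj (acoef k)) = (\<Sum>k=1..n. u i k * cnj (u NG k)) / (cnj (x NG) - 1)"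
    by (simp add: acoef_def sum_divide_distrib)
  also have "(\<Sum>k=1..n. acoef k * cnj (u l k)) = (\<Sum>k=1..n. u NG k * cnj (u l k)) / (x NG - 1)"
    by (simp add: acoef_def sum_divide_distrib)
  also have "(\<Sum>k=1..n. acoef k * cnj (acoef k)) = (\<Sum>k=1..n. u NG k * cnj (u NG k)) / ((x NG - 1) * (cnj (x NG) - 1))"
    by (simp add: acoef_def sum_divide_distrib)
  also have "(\<Sum>k=1..n. u NG k * cnj (u l k)) = - cnj (x l) * x NG"
  proof -
    have "(\<Sum>k=1..n. u NG k * cnj (u l k)) = cnj (\<Sum>k=1..n. u l k * cnj (u NG k))" by (simp add: cnj_sum mult.commute)
    also have "\<dots> = cnj (- x l * cnj (x NG))" using F3N[OF l] by simp
    finally show ?thesis by simp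
  qed
  also note F3N[OF i]
  also note F3NN
  also note F3[OF i l]
  finally have E: "(\<Sum>k=1..n. wm u x NG i k * cnj (wm u x NG l k)) =
     kd i l + x i * cnj (x l) * (-1 + cnj (x NG) / (cnj (x NG) - 1) + x NG / (x NG - 1) + (1 - x NG * cnj (x NG)) / ((x NG - 1) * (cnj (x NG) - 1)))"
    by (simp add: algebra_simps)
  show ?thesis
  proof (cases "x NG = 1")
    case True thus ?thesis using E x_small[OF True i] by simp
  next
    case False thus ?thesis using E id2[OF False] by simp
  qed
qed

lemma wm_U: "wm u x NG \<in> U_grp n"
  unfolding U_grp_def using wm_out wm_col wm_row by blast

lemma wm_rc: "range_cond NG n u (wm u x NG)"
  unfolding range_cond_Suc
proof
  fix j
  show "\<exists>c. \<forall>i. u i j - wm u x NG i j = c * (u i NG - kd i NG)"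
  proof (cases "j = NG")
    case True
    show ?thesis by (rule exI[of _ 1]) (simp add: True wm_def)
  next
    case False
    show ?thesis by (rule exI[of _ "acoef j"]) (simp add: wm_eq[OF False] ucol yv_def mult.commute)
  qed
qed

lemma wm_prod: "u = mmul (reflm NG x) (wm u x NG)"
proof -
  have P: "mmul (reflm NG x) (wm u x NG) \<in> U_grp NG" using U_mul[OF reflm_U[OF x] U_mono[OF wm_U]] .
  show ?thesis
  proof (intro ext)
    fix i j
    show "u i j = mmul (reflm NG x) (wm u x NG) i j"
    proof (cases "i \<in> {1..NG} \<and> j \<in> {1..NG}")
      case False thus ?thesis using U_out[OF u] U_out[OF P] by auto
    next
      case True
      show ?thesis
      proof (cases "j = NG")
        case jN: True
        have "(\<Sum>k=1..NG. cnj (yG k) * wm u x NG k NG) = cnj (yG NG)"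
          using sum_kd_right[OF NN, of "\<lambda>k. cnj (yG k)"] by (simp add: wm_def kd_sym)
        hence "mmul (reflm NG x) (wm u x NG) i j = kd i NG + bet NG x * yG i * cnj (yG NG)"
          using mmul_reflm[OF x] jN by (simp add: wm_def)
        also have "\<dots> = reflm NG x i NG" by (simp add: reflm_def)
        finally show ?thesis using reflm_col[OF x] jN ucol by simp
      next
        case jN: False
        hence j: "j \<in> {1..n}" using True by auto
        have T: "(\<Sum>k=1..NG. cnj (yG k) * wm u x NG k j) = - u NG j - acoef j * (2 - x NG - cnj (x NG))"
        proof -
          have "(\<Sum>k=1..NG. cnj (yG k) * wm u x NG k j) = (\<Sum>k=1..NG. cnj (yG k) * u k j) - acoef j * (\<Sum>k=1..NG. cnj (yG k) * yG k)"
            by (simp add: wm_eq[OF jN] algebra_simps sum_subtractf sum_distrib_left)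
          thus ?thesis using F1[OF j] sph_yy[OF x] by simp
        qed
        have M: "mmul (reflm NG x) (wm u x NG) i j = u i j - yG i * acoef j + bet NG x * yG i * (- u NG j - acoef j * (2 - x NG - cnj (x NG)))"
          using mmul_reflm[OF x] T by (simp add: wm_eq[OF jN])
        show ?thesis
        proof (cases "x NG = 1")
          case True thus ?thesis using M yv_zero[OF ev[OF True]] by simp
        next
          case False
          have "acoef j = bet NG x * (- u NG j - acoef j * (2 - x NG - cnj (x NG)))"
            unfolding acoef_def bet_def by (rule id3[OF False])
          hence "bet NG x * yG i * (- u NG j - acoef j * (2 - x NG - cnj (x NG))) = yG i * acoef j"
            by (metis mult.assoc mult.commute)
          thus ?thesis using M by simp
        qed
      qed
    qed
  qed
qed

lemma step_up: "pi_proj NG n u = v \<Longrightarrow> u = mmul (reflm NG x) v"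
  using pi_unique[OF u wm_U wm_rc] wm_prod by simp

end



lemma U1_eq: assumes "A \<in> U_grp 1" "B \<in> U_grp 1" "\<And>i. A i 1 = B i 1" shows "A = B"
proof (intro ext)
  fix i j show "A i j = B i j"
  proof (cases "j = 1")
    case True thus ?thesis using assms(3) by simp
  next
    case False thus ?thesis using U_out[OF assms(1)] U_out[OF assms(2)] by auto
  qed
qed

context
  fixes x :: "nat \<Rightarrow> nat \<Rightarrow> complex"
  assumes sph: "\<forall>n\<ge>1. x n \<in> sphere_n n"
begin

lemma xs: "x (Suc n) \<in> sphere_n (Suc n)" using sph by simp

lemma rprod_Suc': "rprod (\<lambda>j. r_op j (x j)) (Suc n) = mmul (reflm (Suc n) (x (Suc n))) (rprod (\<lambda>j. r_op j (x j)) n)"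
  using r_op_eq[OF xs] by simp

lemma rprod_U: "rprod (\<lambda>j. r_op j (x j)) n \<in> U_grp n"
proof (induction n)
  case 0 thus ?case by (simp add: Idm_U)
next
  case (Suc n) thus ?case unfolding rprod_Suc' using step_down(1)[OF _ xs] by blast
qed

lemma rprod_col: "rprod (\<lambda>j. r_op j (x j)) (Suc n) i (Suc n) = x (Suc n) i"
  unfolding rprod_Suc' using step_down(2)[OF rprod_U xs] by blast

lemma rprod_pi: "pi_proj (Suc n) n (rprod (\<lambda>j. r_op j (x j)) (Suc n)) = rprod (\<lambda>j. r_op j (x j)) n"
  unfolding rprod_Suc' using step_down(3)[OF rprod_U xs] by blast

lemma part1: "(virtual_isometry u \<and> (\<forall>n\<ge>1. \<forall>i. u n i n = x n i))
              \<longleftrightarrow> (\<forall>n\<ge>1. u n = rprod (\<lambda>j. r_op j (x j)) n)"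
proof
  assume H: "virtual_isometry u \<and> (\<forall>n\<ge>1. \<forall>i. u n i n = x n i)"
  hence vi: "\<And>n. n \<ge> 1 \<Longrightarrow> u n \<in> U_grp n \<and> pi_proj (Suc n) n (u (Suc n)) = u n"
    and col: "\<And>n i. n \<ge> 1 \<Longrightarrow> u n i n = x n i" unfolding virtual_isometry_def by auto
  show "\<forall>n\<ge>1. u n = rprod (\<lambda>j. r_op j (x j)) n"
  proof (intro allI impI)
    fix n :: nat assume "n \<ge> 1"
    thus "u n = rprod (\<lambda>j. r_op j (x j)) n"
    proof (induction n rule: nat_induct_at_least)
      case base
      show ?case
      proof (rule U1_eq)
        show "u 1 \<in> U_grp 1" using vi[of 1] by simp
        show "rprod (\<lambda>j. r_op j (x j)) 1 \<in> U_grp 1" by (rule rprod_U)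
        fix i show "u 1 i 1 = rprod (\<lambda>j. r_op j (x j)) 1 i 1"
          using col[of 1 i] rprod_col[of 0 i] by simp
      qed
    next
      case (Suc n)
      have uS: "u (Suc n) \<in> U_grp (Suc n)" using vi[of "Suc n"] by simp
      have cS: "\<And>i. u (Suc n) i (Suc n) = x (Suc n) i" using col by simp
      have "pi_proj (Suc n) n (u (Suc n)) = rprod (\<lambda>j. r_op j (x j)) n" using vi[OF Suc.hyps] Suc.IH by simp
      hence "u (Suc n) = mmul (reflm (Suc n) (x (Suc n))) (rprod (\<lambda>j. r_op j (x j)) n)"
        by (rule step_up[OF uS xs cS])
      thus ?case by (simp only: rprod_Suc')
    qed
  qed
next
  assume H: "\<forall>n\<ge>1. u n = rprod (\<lambda>j. r_op j (x j)) n"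
  have "virtual_isometry u" unfolding virtual_isometry_def
  proof (intro allI impI conjI)
    fix n :: nat assume n: "n \<ge> 1"
    show "u n \<in> U_grp n" using H n rprod_U by simp
    show "pi_proj (Suc n) n (u (Suc n)) = u n" using H n rprod_pi by simp
  qed
  moreover have "\<forall>n\<ge>1. \<forall>i. u n i n = x n i"
  proof (intro allI impI)
    fix n i :: nat assume n: "n \<ge> 1"
    then obtain m where m: "n = Suc m" by (cases n) auto
    show "u n i n = x n i" using H n rprod_col[of m i] m by simp
  qed
  ultimately show "virtual_isometry u \<and> (\<forall>n\<ge>1. \<forall>i. u n i n = x n i)" by blast
qed

end



lemma perm_mat_id: "perm_mat id = Idm" by (auto simp: perm_mat_def Idm_def kd_def)

lemma evec_sph: assumes "a \<in> {1..j}" shows "evec a \<in> sphere_n j"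
proof -
  have "(\<Sum>i=1..j. (cmod (evec a i))\<^sup>2) = (\<Sum>i=1..j. if i = a then 1 else 0)"
    by (rule sum.cong) (auto simp: evec_def)
  also have "\<dots> = 1" using assms by simp
  finally show ?thesis using assms unfolding sphere_n_def by (auto simp: evec_def)
qed

lemma r_op_perm: assumes t: "t \<in> {1..j}" shows "r_op j (evec t) = perm_mat (tau j t)"
proof (cases "t = j")
  case True thus ?thesis by (simp add: r_op_def tau_def perm_mat_id)
next
  case False
  have "r_op j (evec t) = reflm j (evec t)" using r_op_eq[OF evec_sph[OF t]] .
  also have "\<dots> = perm_mat (tau j t)"
  proof (intro ext)
    fix i k
    have b: "bet j (evec t) = -1" using False by (simp add: bet_def evec_def)
    show "reflm j (evec t) i k = perm_mat (tau j t) i k"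
      using False unfolding reflm_def b tau_def perm_mat_def yv_def evec_def kd_def
      using b[unfolded evec_def] by (auto simp: transpose_def)
  qed
  finally show ?thesis .
qed

lemma mmul_perm: assumes f: "bij f" shows "mmul (perm_mat f) (perm_mat g) = perm_mat (f \<circ> g)"
proof (intro ext)
  fix i j
  have S: "{k. perm_mat f i k \<noteq> 0} = {inv f i}"
    using f by (auto simp: perm_mat_def bij_inv_eq_iff bij_is_surj surj_f_inv_f)
  show "mmul (perm_mat f) (perm_mat g) i j = perm_mat (f \<circ> g) i j"
    unfolding mmul_def S using f by (auto simp: perm_mat_def bij_inv_eq_iff bij_is_surj surj_f_inv_f)
qed

lemma tau_bij: "bij (tau j t)" by (simp add: tau_def)

inductive reach :: "(nat \<Rightarrow> nat) \<Rightarrow> nat set \<Rightarrow> nat \<Rightarrow> nat \<Rightarrow> bool" for f A where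
  r1: "f p \<in> A \<Longrightarrow> reach f A p (f p)"
| r2: "f p \<notin> A \<Longrightarrow> reach f A (f p) y \<Longrightarrow> reach f A p y"

lemma reach_iter: "reach f A p y \<Longrightarrow> 0 < k0 \<Longrightarrow> (f ^^ k0) p \<in> A \<Longrightarrow> \<exists>k>0. (f^^k) p = y \<and> (\<forall>l. 0 < l \<and> l < k \<longrightarrow> (f^^l) p \<notin> A) \<and> y \<in> A"
proof (induction arbitrary: k0 rule: reach.induct)
  case (r1 p) thus ?case by (intro exI[of _ 1]) auto
next
  case (r2 p y)
  have "0 < k0 - 1"
  proof (rule ccontr)
    assume "\<not> 0 < k0 - 1" hence "k0 = 1" using r2.prems by simp
    thus False using r2.prems r2.hyps(1) by simp
  qed
  moreover have "(f ^^ (k0 - 1)) (f p) \<in> A" using r2.prems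
    by (metis One_nat_def Suc_pred funpow_Suc_right o_apply)
  ultimately obtain k where k: "k > 0" "(f^^k) (f p) = y" "\<forall>l. 0 < l \<and> l < k \<longrightarrow> (f^^l) (f p) \<notin> A" "y \<in> A"
    using r2.IH by blast
  show ?case
  proof (intro exI[of _ "Suc k"] conjI allI impI)
    show "(f ^^ Suc k) p = y" using k(2) by (simp add: funpow_Suc_right del: funpow.simps)
    fix l assume l: "0 < l \<and> l < Suc k"
    show "(f ^^ l) p \<notin> A"
    proof (cases "l = 1")
      case True thus ?thesis using r2.hyps(1) by simp
    next
      case False
      then obtain l' where l': "l = Suc l'" "0 < l'" "l' < k" using l by (cases l) auto
      thus ?thesis using k(3) by (simp add: funpow_Suc_right del: funpow.simps)
    qed
  qed (use k in auto)
qed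

lemma reach_first: assumes "reach f A p y" shows "\<exists>k>0. (f^^k) p = y \<and> (\<forall>l. 0 < l \<and> l < k \<longrightarrow> (f^^l) p \<notin> A) \<and> y \<in> A"
  using assms
proof (induction rule: reach.induct)
  case (r1 p) thus ?case by (intro exI[of _ 1]) auto
next
  case (r2 p y)
  then obtain k where k: "k > 0" "(f^^k) (f p) = y" "\<forall>l. 0 < l \<and> l < k \<longrightarrow> (f^^l) (f p) \<notin> A" "y \<in> A"
    by blast
  show ?case
  proof (intro exI[of _ "Suc k"] conjI allI impI)
    show "(f ^^ Suc k) p = y" using k(2) by (simp add: funpow_Suc_right del: funpow.simps)
    fix l assume l: "0 < l \<and> l < Suc k"
    show "(f ^^ l) p \<notin> A"
    proof (cases "l = 1")
      case True thus ?thesis using r2.hyps(1) by simp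
    next
      case False
      then obtain l' where l': "l = Suc l'" "0 < l'" "l' < k" using l by (cases l) auto
      thus ?thesis using k(3) by (simp add: funpow_Suc_right del: funpow.simps)
    qed
  qed (use k in auto)
qed

lemma restrict_reach: assumes "reach f {1..m} i y" "i \<in> {1..m}" shows "perm_restrict m f i = y"
proof -
  obtain k where k: "k>0" "(f^^k) i = y" "\<forall>l. 0 < l \<and> l < k \<longrightarrow> (f^^l) i \<notin> {1..m}" "y \<in> {1..m}"
    using reach_first[OF assms(1)] by blast
  have "(LEAST k. k > 0 \<and> (f ^^ k) i \<in> {1..m}) = k"
    by (rule Least_equality) (use k in \<open>auto simp: not_less[symmetric]\<close>)
  thus ?thesis using assms(2) k(2) by (simp add: perm_restrict_def)
qed

lemma reach_insert:
  assumes fN: "f M0 = M0" and M0: "M0 \<notin> A" and inj: "inj f"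
    and g: "\<And>p. p \<noteq> M0 \<Longrightarrow> g p = f p \<or> (g p = M0 \<and> g M0 = f p)"
    and r: "reach f A p y" and pN: "p \<noteq> M0"
  shows "reach g A p y"
  using r pN
proof (induction rule: reach.induct)
  case (r1 p)
  from g[OF r1.prems] show ?case
  proof
    assume "g p = f p" thus ?thesis using r1.hyps reach.r1[of g p A] by simp
  next
    assume h: "g p = M0 \<and> g M0 = f p"
    have "reach g A M0 (f p)" using reach.r1[of g M0 A] h r1.hyps by simp
    thus ?thesis using reach.r2[of g p A] h M0 by simp
  qed
next
  case (r2 p y)
  have fpN: "f p \<noteq> M0" using r2.prems fN inj by (metis injD)
  have IH: "reach g A (f p) y" using r2.IH fpN .
  from g[OF r2.prems] show ?case
  proof
    assume "g p = f p" thus ?thesis using reach.r2[of g p A y] r2.hyps(1) IH by simp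
  next
    assume h: "g p = M0 \<and> g M0 = f p"
    have "reach g A M0 y" using reach.r2[of g M0 A y] h r2.hyps(1) IH by simp
    thus ?thesis using reach.r2[of g p A y] h M0 by simp
  qed
qed



context
  fixes ii :: "nat \<Rightarrow> nat"
  assumes iiin: "\<And>n. n \<ge> 1 \<Longrightarrow> ii n \<in> {1..n}"
begin

lemma sp_perm: "sigma_prod ii n permutes {1..n}"
proof (induction n)
  case 0 thus ?case by (simp add: id_def[symmetric])
next
  case (Suc n)
  have t: "tau (Suc n) (ii (Suc n)) permutes {1..Suc n}"
    using iiin[of "Suc n"] by (auto simp: tau_def intro: permutes_swap_id)
  have "sigma_prod ii n permutes {1..Suc n}" by (rule permutes_subset[OF Suc.IH]) auto
  hence "tau (Suc n) (ii (Suc n)) \<circ> sigma_prod ii n permutes {1..Suc n}" using permutes_compose[OF _ t] by blast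
  thus ?case by (simp only: sigma_prod.simps)
qed

lemma sp_step: assumes p: "p \<noteq> Suc n"
  shows "sigma_prod ii (Suc n) p = sigma_prod ii n p \<or>
     (sigma_prod ii (Suc n) p = Suc n \<and> sigma_prod ii (Suc n) (Suc n) = sigma_prod ii n p)"
proof -
  let ?f = "sigma_prod ii n" let ?a = "ii (Suc n)"
  have fN: "?f (Suc n) = Suc n" using permutes_not_in[OF sp_perm] by simp
  have fp: "?f p \<noteq> Suc n" using fN p permutes_inj[OF sp_perm[of n]] by (metis injD)
  show ?thesis
  proof (cases "?a = Suc n")
    case True thus ?thesis by (simp add: tau_def)
  next
    case False
    show ?thesis
    proof (cases "?f p = ?a")
      case True thus ?thesis using False fN by (simp add: tau_def)
    next
      case F2: False
      thus ?thesis using False fp by (simp add: tau_def transpose_def)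
    qed
  qed
qed

lemma sp_restrict: assumes m: "1 \<le> m" "m \<le> n" shows "sigma_prod ii m = perm_restrict m (sigma_prod ii n)"
proof (intro ext)
  fix i
  show "sigma_prod ii m i = perm_restrict m (sigma_prod ii n) i"
  proof (cases "i \<in> {1..m}")
    case False thus ?thesis using permutes_not_in[OF sp_perm[of m] False] by (auto simp: perm_restrict_def)
  next
    case True
    have "reach (sigma_prod ii n) {1..m} i (sigma_prod ii m i)" using m(2)
    proof (induction n rule: dec_induct)
      case base
      have "sigma_prod ii m i \<in> {1..m}" using permutes_in_image[OF sp_perm] True by simp
      thus ?case by (rule reach.r1)
    next
      case (step n)
      show ?case
      proof (rule reach_insert[OF _ _ _ _ step.IH])
        show "sigma_prod ii n (Suc n) = Suc n" using permutes_not_in[OF sp_perm] by simp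
        show "Suc n \<notin> {1..m}" using step.hyps by simp
        show "inj (sigma_prod ii n)" using permutes_inj[OF sp_perm] .
        show "i \<noteq> Suc n" using True step.hyps by simp
      qed (rule sp_step)
    qed
    thus ?thesis using restrict_reach True by simp
  qed
qed

lemma sp_vp: "virtual_perm (sigma_prod ii)"
  unfolding virtual_perm_def using sp_perm sp_restrict by blast

end



theorem proposition2p5:
  fixes x :: "nat \<Rightarrow> nat \<Rightarrow> complex"
  assumes sph: "\<forall>n\<ge>1. x n \<in> sphere_n n"
  shows "(\<forall>u. (virtual_isometry u \<and> (\<forall>n\<ge>1. \<forall>i. u n i n = x n i))
              \<longleftrightarrow> (\<forall>n\<ge>1. u n = rprod (\<lambda>j. r_op j (x j)) n))
       \<and> (\<forall>ii :: nat \<Rightarrow> nat. (\<forall>n\<ge>1. ii n \<in> {1..n} \<and> x n = evec (ii n)) \<longrightarrow>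
            virtual_perm (sigma_prod ii) \<and>
            (\<forall>n\<ge>1. rprod (\<lambda>j. r_op j (x j)) n = perm_mat (sigma_prod ii n)))"
proof (intro conjI allI impI)
  fix u show "(virtual_isometry u \<and> (\<forall>n\<ge>1. \<forall>i. u n i n = x n i))
              \<longleftrightarrow> (\<forall>n\<ge>1. u n = rprod (\<lambda>j. r_op j (x j)) n)" by (rule part1[OF sph])
next
  fix ii :: "nat \<Rightarrow> nat" assume H: "\<forall>n\<ge>1. ii n \<in> {1..n} \<and> x n = evec (ii n)"
  have iiin: "\<And>n. n \<ge> 1 \<Longrightarrow> ii n \<in> {1..n}" using H by blast
  show "virtual_perm (sigma_prod ii)" by (rule sp_vp[OF iiin])
  have R: "rprod (\<lambda>j. r_op j (x j)) n = perm_mat (sigma_prod ii n)" for n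
  proof (induction n)
    case 0 thus ?case using perm_mat_id by (simp add: id_def)
  next
    case (Suc n)
    have "r_op (Suc n) (x (Suc n)) = perm_mat (tau (Suc n) (ii (Suc n)))"
      using H r_op_perm[OF iiin[of "Suc n"]] by simp
    thus ?case using Suc.IH mmul_perm[OF tau_bij] by (simp add: comp_def)
  qed
  fix n :: nat assume "1 \<le> n"
  show "rprod (\<lambda>j. r_op j (x j)) n = perm_mat (sigma_prod ii n)" by (rule R)
qed


end
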